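(* Let $G$ be a strongly connected directed graph on $n\ge 1$ vertices with nonnegative integer edge weights and radius $R=\min_u\max_v d_G(u,v)$, and let $k$ be a positive integer. Let $G'$ be obtained from $G$ by multiplying every edge weight by $2$ and adding a new vertex $x$ together with edges $(x,u)$ and $(u,x)$ of weight $k$ for every $u\in V(G)$. Then $R\ge k$ if and only if $\sum_{u\in V(G')}\max_{v\in V(G')}d_{G'}(u,v)=2kn+k$.
   Context: $d_G(u,v)$ denotes the shortest-path distance in $G$. *)

theory Defs
  imports Main "HOL-Library.Extended_Nat"
begin

definition is_walk :: "'a set \<Rightarrow> ('a \<times> 'a) set \<Rightarrow> 'a list \<Rightarrow> 'a \<Rightarrow> 'a \<Rightarrow> bool" where
  "is_walk V E p u v \<longleftrightarrow> p \<noteq> [] \<and> hd p = u \<and> last p = v \<and> set p \<subseteq> V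
     \<and> (\<forall>i < length p - 1. (p ! i, p ! Suc i) \<in> E)"

definition walk_weight :: "('a \<times> 'a \<Rightarrow> nat) \<Rightarrow> 'a list \<Rightarrow> nat" where
  "walk_weight w p = sum_list (map w (zip p (tl p)))"

text \<open>Shortest-path distance d_G(u,v) (infinite if v is unreachable from u).\<close>
definition dist :: "'a set \<Rightarrow> ('a \<times> 'a) set \<Rightarrow> ('a \<times> 'a \<Rightarrow> nat) \<Rightarrow> 'a \<Rightarrow> 'a \<Rightarrow> enat" where
  "dist V E w u v = Inf {enat (walk_weight w p) | p. is_walk V E p u v}"

definition ecc :: "'a set \<Rightarrow> ('a \<times> 'a) set \<Rightarrow> ('a \<times> 'a \<Rightarrow> nat) \<Rightarrow> 'a \<Rightarrow> enat" where
  "ecc V E w u = Max ((\<lambda>v. dist V E w u v) ` V)"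

definition radius :: "'a set \<Rightarrow> ('a \<times> 'a) set \<Rightarrow> ('a \<times> 'a \<Rightarrow> nat) \<Rightarrow> enat" where
  "radius V E w = Min ((\<lambda>u. ecc V E w u) ` V)"

definition strongly_connected :: "'a set \<Rightarrow> ('a \<times> 'a) set \<Rightarrow> bool" where
  "strongly_connected V E \<longleftrightarrow> (\<forall>u\<in>V. \<forall>v\<in>V. (u, v) \<in> E\<^sup>*)"

text \<open>The construction G': old vertices are Some u, the new vertex x is None.\<close>
definition ext_V :: "'a set \<Rightarrow> 'a option set" where
  "ext_V V = Some ` V \<union> {None}"

definition ext_E :: "'a set \<Rightarrow> ('a \<times> 'a) set \<Rightarrow> ('a option \<times> 'a option) set" where
  "ext_E V E = {(Some a, Some b) | a b. (a, b) \<in> E}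
              \<union> {(None, Some u) | u. u \<in> V} \<union> {(Some u, None) | u. u \<in> V}"

definition ext_w :: "('a \<times> 'a \<Rightarrow> nat) \<Rightarrow> nat \<Rightarrow> 'a option \<times> 'a option \<Rightarrow> nat" where
  "ext_w w k e = (case e of (Some a, Some b) \<Rightarrow> 2 * w (a, b) | _ \<Rightarrow> k)"

end

theory Submission
  imports Defs
begin

definition chn :: "('b \<times> 'b) set \<Rightarrow> 'b list \<Rightarrow> bool" where
  "chn E p \<longleftrightarrow> (\<forall>i < length p - 1. (p ! i, p ! Suc i) \<in> E)"

lemma chn_single[simp]: "chn E [a]" by (simp add: chn_def)

lemma chn_Cons2[simp]: "chn E (a # b # q) \<longleftrightarrow> (a, b) \<in> E \<and> chn E (b # q)"
  unfolding chn_def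
proof (intro iffI conjI allI impI)
  assume h: "\<forall>i<length (a # b # q) - 1. ((a # b # q) ! i, (a # b # q) ! Suc i) \<in> E"
  show "(a, b) \<in> E" using h[rule_format, of 0] by simp
  fix i assume "i < length (b # q) - 1"
  then show "((b # q) ! i, (b # q) ! Suc i) \<in> E" using h[rule_format, of "Suc i"] by simp
next
  fix i assume h: "(a, b) \<in> E \<and> (\<forall>i<length (b # q) - 1. ((b # q) ! i, (b # q) ! Suc i) \<in> E)"
    and i: "i < length (a # b # q) - 1"
  show "((a # b # q) ! i, (a # b # q) ! Suc i) \<in> E"
  proof (cases i)
    case 0 then show ?thesis using h by simp
  next
    case (Suc j) then show ?thesis using h i by simp
  qed
qed

lemma ww_single[simp]: "walk_weight w [a] = 0" by (simp add: walk_weight_def)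
lemma ww_Cons2[simp]: "walk_weight w (a # b # q) = w (a, b) + walk_weight w (b # q)"
  by (simp add: walk_weight_def)

lemma is_walk_chn: "is_walk V E p u v \<longleftrightarrow> p \<noteq> [] \<and> hd p = u \<and> last p = v \<and> set p \<subseteq> V \<and> chn E p"
  by (simp add: is_walk_def chn_def)

lemma none_bound:
  "chn (ext_E V E) p \<Longrightarrow> p \<noteq> [] \<Longrightarrow> None \<in> set p \<Longrightarrow>
   k * ((if hd p = None then 0 else 1) + (if last p = None then 0 else 1)) \<le> walk_weight (ext_w w k) p"
proof (induction p)
  case Nil then show ?case by simp
next
  case (Cons a q)
  show ?case
  proof (cases q)
    case Nil then show ?thesis using Cons by simp
  next
    case (Cons b q')
    have e: "(a, b) \<in> ext_E V E" and cq: "chn (ext_E V E) q" using Cons.prems Cons by auto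
    have ww: "walk_weight (ext_w w k) (a # q) = ext_w w k (a, b) + walk_weight (ext_w w k) q"
      using Cons by simp
    have lq: "last (a # q) = last q" using Cons by simp
    show ?thesis
    proof (cases a)
      case None
      then obtain b' where b: "b = Some b'" using e by (auto simp: ext_E_def)
      have wab: "ext_w w k (a, b) = k" using None b by (simp add: ext_w_def)
      show ?thesis
      proof (cases "None \<in> set q")
        case True
        have "k * ((if hd q = None then 0 else 1) + (if last q = None then 0 else 1)) \<le> walk_weight (ext_w w k) q"
          using Cons.IH cq True Cons by auto
        moreover have "hd q \<noteq> None" using Cons b by simp
        ultimately show ?thesis using ww wab lq None by (auto split: if_splits)
      next
        case False
        then have "last q \<noteq> None" using Cons by (metis last_in_set list.distinct(1))
        then show ?thesis using ww wab lq None by auto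
      qed
    next
      case (Some a')
      have T: "None \<in> set q" using Cons.prems Some by auto
      have IH: "k * ((if hd q = None then 0 else 1) + (if last q = None then 0 else 1)) \<le> walk_weight (ext_w w k) q"
        using Cons.IH cq T Cons by auto
      show ?thesis
      proof (cases "hd q = None")
        case True
        then have "b = None" using Cons by simp
        then have "ext_w w k (a, b) = k" using Some by (simp add: ext_w_def)
        then show ?thesis using ww IH lq Some True by (auto split: if_splits)
      next
        case False
        then show ?thesis using ww IH lq Some by (auto split: if_splits)
      qed
    qed
  qed
qed

lemma ww_map: "walk_weight (ext_w w k) (map Some q) = 2 * walk_weight w q"
proof (induction q)
  case Nil then show ?case by (simp add: walk_weight_def)
next
  case (Cons a q) then show ?case by (cases q) (auto simp: ext_w_def)
qed

lemma chn_map: "chn E q \<Longrightarrow> chn (ext_E V E) (map Some q)"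
  by (auto simp: chn_def ext_E_def)

lemma chn_unmap: "chn (ext_E V E) (map Some q) \<Longrightarrow> chn E q"
  by (auto simp: chn_def ext_E_def)

lemma dist_le: "is_walk V E p u v \<Longrightarrow> dist V E w u v \<le> enat (walk_weight w p)"
  unfolding dist_def by (rule Inf_lower) auto

lemma dist_ge: "(\<And>p. is_walk V E p u v \<Longrightarrow> c \<le> walk_weight w p) \<Longrightarrow> enat c \<le> dist V E w u v"
  unfolding dist_def by (rule Inf_greatest) auto

lemma L_xu: "u \<in> V \<Longrightarrow> dist (ext_V V) (ext_E V E) (ext_w w k) None (Some u) = enat k"
proof (rule antisym)
  assume u: "u \<in> V"
  have "is_walk (ext_V V) (ext_E V E) [None, Some u] None (Some u)"
    using u by (auto simp: is_walk_chn ext_V_def ext_E_def)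
  from dist_le[OF this, of "ext_w w k"] show "dist (ext_V V) (ext_E V E) (ext_w w k) None (Some u) \<le> enat k"
    by (simp add: ext_w_def)
  show "enat k \<le> dist (ext_V V) (ext_E V E) (ext_w w k) None (Some u)"
  proof (rule dist_ge)
    fix p assume "is_walk (ext_V V) (ext_E V E) p None (Some u)"
    then have "p \<noteq> []" "hd p = None" "last p = Some u" "chn (ext_E V E) p" by (auto simp: is_walk_chn)
    moreover then have "None \<in> set p" by (metis hd_in_set)
    ultimately show "k \<le> walk_weight (ext_w w k) p" using none_bound[of V E p k w] by auto
  qed
qed

lemma L_ux: "u \<in> V \<Longrightarrow> dist (ext_V V) (ext_E V E) (ext_w w k) (Some u) None = enat k"
proof (rule antisym)
  assume u: "u \<in> V"
  have "is_walk (ext_V V) (ext_E V E) [Some u, None] (Some u) None"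
    using u by (auto simp: is_walk_chn ext_V_def ext_E_def)
  from dist_le[OF this, of "ext_w w k"] show "dist (ext_V V) (ext_E V E) (ext_w w k) (Some u) None \<le> enat k"
    by (simp add: ext_w_def)
  show "enat k \<le> dist (ext_V V) (ext_E V E) (ext_w w k) (Some u) None"
  proof (rule dist_ge)
    fix p assume "is_walk (ext_V V) (ext_E V E) p (Some u) None"
    then have "p \<noteq> []" "hd p = Some u" "last p = None" "chn (ext_E V E) p" by (auto simp: is_walk_chn)
    moreover then have "None \<in> set p" by (metis last_in_set)
    ultimately show "k \<le> walk_weight (ext_w w k) p" using none_bound[of V E p k w] by auto
  qed
qed

lemma L_xx: "dist (ext_V V) (ext_E V E) (ext_w w k) None None = 0"
proof -
  have "is_walk (ext_V V) (ext_E V E) [None] None None"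
    by (auto simp: is_walk_chn ext_V_def)
  from dist_le[OF this, of "ext_w w k"] show ?thesis by (simp add: zero_enat_def[symmetric])
qed

lemma L_uv_le: "u \<in> V \<Longrightarrow> v \<in> V \<Longrightarrow> dist (ext_V V) (ext_E V E) (ext_w w k) (Some u) (Some v) \<le> enat (2 * k)"
proof -
  assume u: "u \<in> V" and v: "v \<in> V"
  have "is_walk (ext_V V) (ext_E V E) [Some u, None, Some v] (Some u) (Some v)"
    using u v by (auto simp: is_walk_chn ext_V_def ext_E_def)
  from dist_le[OF this, of "ext_w w k"] show ?thesis by (simp add: ext_w_def mult_2)
qed

lemma L_uv_walk: "is_walk V E q u v \<Longrightarrow>
   dist (ext_V V) (ext_E V E) (ext_w w k) (Some u) (Some v) \<le> enat (2 * walk_weight w q)"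
proof -
  assume q: "is_walk V E q u v"
  then have "is_walk (ext_V V) (ext_E V E) (map Some q) (Some u) (Some v)"
    by (auto simp: is_walk_chn ext_V_def hd_map last_map intro: chn_map)
  from dist_le[OF this, of "ext_w w k"] show ?thesis by (simp add: ww_map)
qed

lemma L_uv_ge: "enat k \<le> dist V E w u v \<Longrightarrow>
   enat (2 * k) \<le> dist (ext_V V) (ext_E V E) (ext_w w k) (Some u) (Some v)"
proof (rule dist_ge)
  fix p assume d: "enat k \<le> dist V E w u v" and p: "is_walk (ext_V V) (ext_E V E) p (Some u) (Some v)"
  then have pp: "p \<noteq> []" "hd p = Some u" "last p = Some v" "chn (ext_E V E) p" "set p \<subseteq> ext_V V"
    by (auto simp: is_walk_chn)
  show "2 * k \<le> walk_weight (ext_w w k) p"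
  proof (cases "None \<in> set p")
    case True
    then show ?thesis using none_bound[of V E p k w] pp by auto
  next
    case False
    define q where "q = map the p"
    have pq: "p = map Some q" unfolding q_def using False
      by (induction p) (auto)
    have "is_walk V E q u v"
      using pp pq by (auto simp: is_walk_chn ext_V_def hd_map last_map intro: chn_unmap)
    from order_trans[OF d dist_le[OF this, of w]] have "k \<le> walk_weight w q" by simp
    then show ?thesis using pq by (simp add: ww_map)
  qed
qed


lemma fin_extV: "finite V \<Longrightarrow> finite (ext_V V)" by (simp add: ext_V_def)
lemma ball_extV: "(\<forall>x\<in>ext_V V. P x) \<longleftrightarrow> P None \<and> (\<forall>u\<in>V. P (Some u))" by (auto simp: ext_V_def)
lemma bex_extV: "(\<exists>x\<in>ext_V V. P x) \<longleftrightarrow> P None \<or> (\<exists>u\<in>V. P (Some u))" by (auto simp: ext_V_def)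
lemma None_extV[simp]: "None \<in> ext_V V" by (auto simp: ext_V_def)
lemma extV_ne[simp]: "ext_V V \<noteq> {}" by (auto simp: ext_V_def)
lemma Some_extV[simp]: "Some u \<in> ext_V V \<longleftrightarrow> u \<in> V" by (auto simp: ext_V_def)

lemma ecc_x: "finite V \<Longrightarrow> V \<noteq> {} \<Longrightarrow> ecc (ext_V V) (ext_E V E) (ext_w w k) None = enat k"
proof -
  assume f: "finite V" and ne: "V \<noteq> {}"
  then obtain v0 where v0: "v0 \<in> V" by auto
  show ?thesis unfolding ecc_def
  proof (rule Max_eqI)
    show "finite ((\<lambda>v. dist (ext_V V) (ext_E V E) (ext_w w k) None v) ` ext_V V)" using f by (simp add: fin_extV)
    fix y assume "y \<in> (\<lambda>v. dist (ext_V V) (ext_E V E) (ext_w w k) None v) ` ext_V V"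
    then obtain x where "x \<in> ext_V V" "y = dist (ext_V V) (ext_E V E) (ext_w w k) None x" by auto
    then show "y \<le> enat k" by (cases x) (auto simp: L_xu L_xx)
  next
    show "enat k \<in> (\<lambda>v. dist (ext_V V) (ext_E V E) (ext_w w k) None v) ` ext_V V"
      using v0 L_xu[OF v0] by (metis Some_extV image_eqI)
  qed
qed

lemma ecc_u_le: "finite V \<Longrightarrow> u \<in> V \<Longrightarrow> ecc (ext_V V) (ext_E V E) (ext_w w k) (Some u) \<le> enat (2 * k)"
  unfolding ecc_def
  by (subst Max_le_iff) (auto simp: fin_extV ball_extV L_ux L_uv_le)

lemma ecc_u_ge: "finite V \<Longrightarrow> u \<in> V \<Longrightarrow> enat k \<le> ecc (ext_V V) (ext_E V E) (ext_w w k) (Some u)"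
  unfolding ecc_def
  by (subst Max_ge_iff) (auto simp: fin_extV bex_extV L_ux)

lemma ecc_u_iff: "finite V \<Longrightarrow> u \<in> V \<Longrightarrow> k > 0 \<Longrightarrow>
   ecc (ext_V V) (ext_E V E) (ext_w w k) (Some u) = enat (2 * k) \<longleftrightarrow> enat k \<le> ecc V E w u"
proof
  assume f: "finite V" and u: "u \<in> V" and k: "k > 0"
  {
    assume "ecc (ext_V V) (ext_E V E) (ext_w w k) (Some u) = enat (2 * k)"
    then have "enat (2 * k) \<in> (\<lambda>v. dist (ext_V V) (ext_E V E) (ext_w w k) (Some u) v) ` ext_V V"
      unfolding ecc_def using f by (metis (no_types, lifting) Max_in fin_extV finite_imageI image_is_empty None_extV empty_iff)
    then obtain v' where v': "v' \<in> ext_V V" "dist (ext_V V) (ext_E V E) (ext_w w k) (Some u) v' = enat (2 * k)" by auto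
    show "enat k \<le> ecc V E w u"
    proof (cases v')
      case None
      then show ?thesis using v' L_ux[OF u, of E w k] k by simp
    next
      case (Some v)
      then have v: "v \<in> V" using v' by auto
      have "enat k \<le> dist V E w u v"
      proof (rule ccontr)
        assume "\<not> enat k \<le> dist V E w u v"
        then have "dist V E w u v < enat k" by simp
        then obtain q where q: "is_walk V E q u v" "enat (walk_weight w q) < enat k"
          unfolding dist_def by (auto simp: Inf_less_iff)
        from L_uv_walk[OF q(1), where k=k and w=w] v' Some q(2) show False by simp
      qed
      also have "\<dots> \<le> ecc V E w u" unfolding ecc_def using f v by (auto intro: Max_ge)
      finally show ?thesis .
    qed
  }
  {
    assume "enat k \<le> ecc V E w u"
    then obtain v where v: "v \<in> V" "enat k \<le> dist V E w u v"
      unfolding ecc_def using f u by (subst (asm) Max_ge_iff) auto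
    have "enat (2 * k) \<le> dist (ext_V V) (ext_E V E) (ext_w w k) (Some u) (Some v)"
      using L_uv_ge[OF v(2)] .
    also have "\<dots> \<le> ecc (ext_V V) (ext_E V E) (ext_w w k) (Some u)"
      unfolding ecc_def using f v by (auto simp: fin_extV intro: Max_ge)
    finally show "ecc (ext_V V) (ext_E V E) (ext_w w k) (Some u) = enat (2 * k)"
      using ecc_u_le[OF f u, of E w k] by simp
  }
qed

lemma sum_enat_gen: "finite A \<Longrightarrow> (\<Sum>u\<in>A. enat (f u)) = enat (\<Sum>u\<in>A. f u)"
  by (induction A rule: finite_induct) (auto simp: zero_enat_def)

lemma sum_all_eq: "finite A \<Longrightarrow> (\<forall>u\<in>A. (f::_\<Rightarrow>nat) u \<le> c) \<Longrightarrow>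
   (\<Sum>u\<in>A. f u) = c * card A \<longleftrightarrow> (\<forall>u\<in>A. f u = c)"
proof
  assume fA: "finite A" and b: "\<forall>u\<in>A. f u \<le> c" and s: "(\<Sum>u\<in>A. f u) = c * card A"
  show "\<forall>u\<in>A. f u = c"
  proof (rule ccontr)
    assume "\<not> (\<forall>u\<in>A. f u = c)"
    then obtain u where "u \<in> A" "f u < c" using b by force
    then have "(\<Sum>u\<in>A. f u) < (\<Sum>u\<in>A. c)" using fA b by (intro sum_strict_mono_ex1) auto
    then show False using s by simp
  qed
next
  assume "finite A" "\<forall>u\<in>A. f u \<le> c" "\<forall>u\<in>A. f u = c"
  then show "(\<Sum>u\<in>A. f u) = c * card A" by simp
qed

theorem mainTheorem5:
  fixes V :: "'a set" and E :: "('a \<times> 'a) set" and w :: "'a \<times> 'a \<Rightarrow> nat" and k n :: nat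
  assumes "finite V" and "card V = n" and "n \<ge> 1"
    and "E \<subseteq> V \<times> V"
    and "strongly_connected V E"
    and "k > 0"
  shows "radius V E w \<ge> enat k \<longleftrightarrow>
    (\<Sum>u\<in>ext_V V. ecc (ext_V V) (ext_E V E) (ext_w w k) u) = enat (2 * k * n + k)"
proof -
  note f = assms(1)
  have ne: "V \<noteq> {}" using assms(2,3) by auto
  define ec where "ec = ecc (ext_V V) (ext_E V E) (ext_w w k)"
  define e where "e u = the_enat (ec (Some u))" for u
  have eu: "ec (Some u) = enat (e u)" if "u \<in> V" for u
    using ecc_u_le[OF f that, of E w k] unfolding e_def ec_def
    by (cases "ecc (ext_V V) (ext_E V E) (ext_w w k) (Some u)") auto
  have eb: "\<forall>u\<in>V. e u \<le> 2 * k"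
    using ecc_u_le[OF f, of _ E w k] eu unfolding ec_def by fastforce
  have "(\<Sum>u\<in>ext_V V. ec u) = ec None + (\<Sum>u\<in>Some ` V. ec u)"
    unfolding ext_V_def using f by (subst sum.union_disjoint) auto
  also have "(\<Sum>u\<in>Some ` V. ec u) = (\<Sum>u\<in>V. ec (Some u))"
    by (subst sum.reindex) auto
  also have "\<dots> = (\<Sum>u\<in>V. enat (e u))" using eu by (intro sum.cong) auto
  also have "\<dots> = enat (\<Sum>u\<in>V. e u)" using f by (rule sum_enat_gen)
  also have "ec None = enat k" unfolding ec_def using ecc_x[OF f ne] .
  finally have S: "(\<Sum>u\<in>ext_V V. ec u) = enat (k + (\<Sum>u\<in>V. e u))" by simp
  have "radius V E w \<ge> enat k \<longleftrightarrow> (\<forall>u\<in>V. enat k \<le> ecc V E w u)"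
    unfolding radius_def using f ne by (subst Min_ge_iff) auto
  also have "\<dots> \<longleftrightarrow> (\<forall>u\<in>V. e u = 2 * k)"
    using ecc_u_iff[OF f _ assms(6), of _ E w] eu unfolding ec_def by auto
  also have "\<dots> \<longleftrightarrow> (\<Sum>u\<in>V. e u) = 2 * k * n"
    using sum_all_eq[OF f eb] assms(2) by simp
  also have "\<dots> \<longleftrightarrow> (\<Sum>u\<in>ext_V V. ec u) = enat (2 * k * n + k)"
    using S by simp
  finally show ?thesis unfolding ec_def .
qed

end
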